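(* Consider the ride-hailing model in the context. If $(\bm x^A,\bm w^A,\bm x^C,\bm w^C)$ is a mixed-fleet equilibrium and $\bm b^C_e=(\sum_{j=1}^L x^C_{ji})_{i=1}^L$, then $\bm x^C$ is an optimal solution of $\mathcal{CV}(\bm b^C_e)$ and $\bm w^C$ is a vector of Lagrange multipliers of its capacity constraints.
   Context: Model. There are $L$ regions $\{1,\dots,L\}$. For regions $i,j$, $b_{ij}\ge0$ is the customer rate from $i$ to $j$; $b_i=\sum_j b_{ij}$ (assumed $>0$), $q_{ij}=b_{ij}/b_i$. Travel times satisfy $t_{ij}>0$ for $i\ne j$, $t_{ii}=0$. Constants: $p>0$, $c\ge0$, $R\in(0,1)$, $N>0$, $M\ge0$. For $i,\alpha$: $\tau^{dr}_{i\alpha}=t_{i\alpha}+\sum_j q_{\alpha j}t_{\alpha j}$, $r^A_{i\alpha}=p\sum_j q_{\alpha j}t_{\alpha j}-c\tau^{dr}_{i\alpha}$, $r^C_{i\alpha}=p(1-R)\sum_j q_{\alpha j}t_{\alpha j}-c\tau^{dr}_{i\alpha}$, $r^{C2P}_{i\alpha}=pR\sum_j q_{\alpha j}t_{\alpha j}$. A matrix $\bm x\in\mathbb R^{L\times L}_{\ge0}$ satisfies flow balance if $\sum_j(\sum_k x_{kj})q_{ji}=\sum_\alpha x_{i\alpha}$ for all $i$. $\mathcal{CV}(\bm b^C)$: maximize $N\log\sum_{i,\alpha}r^C_{i\alpha}x_{i\alpha}-\sum_{i,\alpha}\tau^{dr}_{i\alpha}x_{i\alpha}$ over $\bm x\ge0$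 satisfying flow balance and $\sum_j x_{ji}\le b^C_i$ for all $i$. Mixed-fleet equilibrium: a tuple $(\bm x^A,\bm w^A,\bm x^C,\bm w^C)$ with $\bm x^A,\bm x^C\in\mathbb R^{L\times L}_{\ge0}$, $\bm w^A,\bm w^C\in\mathbb R^L_{\ge0}$ such that (i) $\sum_j(x^A_{ji}+x^C_{ji})\le b_i$ for all $i$; $\bm x^A,\bm x^C$ satisfy flow balance; $\sum_{i,\alpha}(\tau^{dr}_{i\alpha}+w^A_\alpha)x^A_{i\alpha}\le M$ and $\sum_{i,\alpha}(\tau^{dr}_{i\alpha}+w^C_\alpha)x^C_{i\alpha}=N$; (ii) $\bm x^C$ maximizes $\sum_{i,\alpha}r^C_{i\alpha}x_{i\alpha}$ over all $\bm x\ge0$ satisfying flow balance and $\sum_{i,\alpha}(\tau^{dr}_{i\alpha}+w^C_\alpha)x_{i\alpha}=N$; (iii) the platform profit $\sum_{i,\alpha}r^A_{i\alpha}x^A_{i\alpha}+\sum_{i,\alpha}r^{C2P}_{i\alpha}x^C_{i\alpha}$ is maximal among all tuples satisfying (i) and (ii). *)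

theory Defs
  imports Complex_Main "HOL-Library.Extended_Real"
begin

text \<open>Regions are the elements of a finite type 'n. Rates b i j, travel times t i j.
  Matrices are functions 'n \<Rightarrow> 'n \<Rightarrow> real, vectors are functions 'n \<Rightarrow> real.\<close>

definition q :: "('n::finite \<Rightarrow> 'n \<Rightarrow> real) \<Rightarrow> 'n \<Rightarrow> 'n \<Rightarrow> real" where
  "q b i j = b i j / (\<Sum>k\<in>UNIV. b i k)"

definition avg_trip :: "('n::finite \<Rightarrow> 'n \<Rightarrow> real) \<Rightarrow> ('n \<Rightarrow> 'n \<Rightarrow> real) \<Rightarrow> 'n \<Rightarrow> real" where
  "avg_trip b t \<alpha> = (\<Sum>j\<in>UNIV. q b \<alpha> j * t \<alpha> j)"

definition tau_dr :: "('n::finite \<Rightarrow> 'n \<Rightarrow> real) \<Rightarrow> ('n \<Rightarrow> 'n \<Rightarrow> real) \<Rightarrow> 'n \<Rightarrow> 'n \<Rightarrow> real" where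
  "tau_dr b t i \<alpha> = t i \<alpha> + avg_trip b t \<alpha>"

definition rA :: "real \<Rightarrow> real \<Rightarrow> ('n::finite \<Rightarrow> 'n \<Rightarrow> real) \<Rightarrow> ('n \<Rightarrow> 'n \<Rightarrow> real) \<Rightarrow> 'n \<Rightarrow> 'n \<Rightarrow> real" where
  "rA p c b t i \<alpha> = p * avg_trip b t \<alpha> - c * tau_dr b t i \<alpha>"

definition rC :: "real \<Rightarrow> real \<Rightarrow> real \<Rightarrow> ('n::finite \<Rightarrow> 'n \<Rightarrow> real) \<Rightarrow> ('n \<Rightarrow> 'n \<Rightarrow> real) \<Rightarrow> 'n \<Rightarrow> 'n \<Rightarrow> real" where
  "rC p c R b t i \<alpha> = p * (1 - R) * avg_trip b t \<alpha> - c * tau_dr b t i \<alpha>"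

definition rC2P :: "real \<Rightarrow> real \<Rightarrow> ('n::finite \<Rightarrow> 'n \<Rightarrow> real) \<Rightarrow> ('n \<Rightarrow> 'n \<Rightarrow> real) \<Rightarrow> 'n \<Rightarrow> 'n \<Rightarrow> real" where
  "rC2P p R b t i \<alpha> = p * R * avg_trip b t \<alpha>"

definition nonneg_mat :: "('n \<Rightarrow> 'n \<Rightarrow> real) \<Rightarrow> bool" where
  "nonneg_mat x \<longleftrightarrow> (\<forall>i j. 0 \<le> x i j)"

definition nonneg_vec :: "('n \<Rightarrow> real) \<Rightarrow> bool" where
  "nonneg_vec w \<longleftrightarrow> (\<forall>i. 0 \<le> w i)"

definition flow_balance :: "('n::finite \<Rightarrow> 'n \<Rightarrow> real) \<Rightarrow> ('n \<Rightarrow> 'n \<Rightarrow> real) \<Rightarrow> bool" where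
  "flow_balance b x \<longleftrightarrow>
     (\<forall>i. (\<Sum>j\<in>UNIV. (\<Sum>k\<in>UNIV. x k j) * q b j i) = (\<Sum>\<alpha>\<in>UNIV. x i \<alpha>))"

definition wsum :: "('n::finite \<Rightarrow> 'n \<Rightarrow> real) \<Rightarrow> ('n \<Rightarrow> 'n \<Rightarrow> real) \<Rightarrow> real" where
  "wsum f x = (\<Sum>i\<in>UNIV. \<Sum>\<alpha>\<in>UNIV. f i \<alpha> * x i \<alpha>)"

definition inflow :: "('n::finite \<Rightarrow> 'n \<Rightarrow> real) \<Rightarrow> 'n \<Rightarrow> real" where
  "inflow x i = (\<Sum>j\<in>UNIV. x j i)"

definition CV_feasible ::
  "('n::finite \<Rightarrow> 'n \<Rightarrow> real) \<Rightarrow> ('n \<Rightarrow> real) \<Rightarrow> ('n \<Rightarrow> 'n \<Rightarrow> real) \<Rightarrow> bool" where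
  "CV_feasible b bC x \<longleftrightarrow> nonneg_mat x \<and> flow_balance b x \<and> (\<forall>i. inflow x i \<le> bC i)"

text \<open>Objective N log(\<Sum> r^C x) - \<Sum> \<tau> x, with the standard extended-value
  convention log z = -\<infinity> for z \<le> 0.\<close>
definition CV_obj ::
  "real \<Rightarrow> real \<Rightarrow> real \<Rightarrow> real \<Rightarrow> ('n::finite \<Rightarrow> 'n \<Rightarrow> real) \<Rightarrow> ('n \<Rightarrow> 'n \<Rightarrow> real)
   \<Rightarrow> ('n \<Rightarrow> 'n \<Rightarrow> real) \<Rightarrow> ereal" where
  "CV_obj p c R N b t x =
     (if 0 < wsum (rC p c R b t) x
      then ereal (N * ln (wsum (rC p c R b t) x) - wsum (tau_dr b t) x)
      else -\<infinity>)"

definition CV_optimal ::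
  "real \<Rightarrow> real \<Rightarrow> real \<Rightarrow> real \<Rightarrow> ('n::finite \<Rightarrow> 'n \<Rightarrow> real) \<Rightarrow> ('n \<Rightarrow> 'n \<Rightarrow> real)
   \<Rightarrow> ('n \<Rightarrow> real) \<Rightarrow> ('n \<Rightarrow> 'n \<Rightarrow> real) \<Rightarrow> bool" where
  "CV_optimal p c R N b t bC x \<longleftrightarrow>
     CV_feasible b bC x \<and>
     (\<forall>y. CV_feasible b bC y \<longrightarrow> CV_obj p c R N b t y \<le> CV_obj p c R N b t x)"

definition CV_lagrangian ::
  "real \<Rightarrow> real \<Rightarrow> real \<Rightarrow> real \<Rightarrow> ('n::finite \<Rightarrow> 'n \<Rightarrow> real) \<Rightarrow> ('n \<Rightarrow> 'n \<Rightarrow> real)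
   \<Rightarrow> ('n \<Rightarrow> real) \<Rightarrow> ('n \<Rightarrow> real) \<Rightarrow> ('n \<Rightarrow> 'n \<Rightarrow> real) \<Rightarrow> ereal" where
  "CV_lagrangian p c R N b t bC lam x =
     CV_obj p c R N b t x - ereal (\<Sum>i\<in>UNIV. lam i * (inflow x i - bC i))"

definition CV_capacity_multipliers ::
  "real \<Rightarrow> real \<Rightarrow> real \<Rightarrow> real \<Rightarrow> ('n::finite \<Rightarrow> 'n \<Rightarrow> real) \<Rightarrow> ('n \<Rightarrow> 'n \<Rightarrow> real)
   \<Rightarrow> ('n \<Rightarrow> real) \<Rightarrow> ('n \<Rightarrow> 'n \<Rightarrow> real) \<Rightarrow> ('n \<Rightarrow> real) \<Rightarrow> bool" where
  "CV_capacity_multipliers p c R N b t bC x lam \<longleftrightarrow>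
     nonneg_vec lam \<and>
     (\<forall>i. lam i * (inflow x i - bC i) = 0) \<and>
     (\<forall>y. nonneg_mat y \<and> flow_balance b y \<longrightarrow>
          CV_lagrangian p c R N b t bC lam y \<le> CV_lagrangian p c R N b t bC lam x)"

definition eq_cond_i ::
  "real \<Rightarrow> real \<Rightarrow> ('n::finite \<Rightarrow> 'n \<Rightarrow> real) \<Rightarrow> ('n \<Rightarrow> 'n \<Rightarrow> real)
   \<Rightarrow> ('n \<Rightarrow> 'n \<Rightarrow> real) \<Rightarrow> ('n \<Rightarrow> real) \<Rightarrow> ('n \<Rightarrow> 'n \<Rightarrow> real) \<Rightarrow> ('n \<Rightarrow> real) \<Rightarrow> bool" where
  "eq_cond_i N M b t xA wA xC wC \<longleftrightarrow>
     nonneg_mat xA \<and> nonneg_vec wA \<and> nonneg_mat xC \<and> nonneg_vec wC \<and>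
     (\<forall>i. inflow xA i + inflow xC i \<le> (\<Sum>j\<in>UNIV. b i j)) \<and>
     flow_balance b xA \<and> flow_balance b xC \<and>
     wsum (\<lambda>i \<alpha>. tau_dr b t i \<alpha> + wA \<alpha>) xA \<le> M \<and>
     wsum (\<lambda>i \<alpha>. tau_dr b t i \<alpha> + wC \<alpha>) xC = N"

definition eq_cond_ii ::
  "real \<Rightarrow> real \<Rightarrow> real \<Rightarrow> real \<Rightarrow> ('n::finite \<Rightarrow> 'n \<Rightarrow> real) \<Rightarrow> ('n \<Rightarrow> 'n \<Rightarrow> real)
   \<Rightarrow> ('n \<Rightarrow> 'n \<Rightarrow> real) \<Rightarrow> ('n \<Rightarrow> real) \<Rightarrow> bool" where
  "eq_cond_ii p c R N b t xC wC \<longleftrightarrow>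
     (\<forall>x. nonneg_mat x \<and> flow_balance b x \<and>
          wsum (\<lambda>i \<alpha>. tau_dr b t i \<alpha> + wC \<alpha>) x = N \<longrightarrow>
          wsum (rC p c R b t) x \<le> wsum (rC p c R b t) xC)"

definition platform_profit ::
  "real \<Rightarrow> real \<Rightarrow> real \<Rightarrow> ('n::finite \<Rightarrow> 'n \<Rightarrow> real) \<Rightarrow> ('n \<Rightarrow> 'n \<Rightarrow> real)
   \<Rightarrow> ('n \<Rightarrow> 'n \<Rightarrow> real) \<Rightarrow> ('n \<Rightarrow> 'n \<Rightarrow> real) \<Rightarrow> real" where
  "platform_profit p c R b t xA xC = wsum (rA p c b t) xA + wsum (rC2P p R b t) xC"

definition mixed_fleet_equilibrium ::
  "real \<Rightarrow> real \<Rightarrow> real \<Rightarrow> real \<Rightarrow> real \<Rightarrow> ('n::finite \<Rightarrow> 'n \<Rightarrow> real) \<Rightarrow> ('n \<Rightarrow> 'n \<Rightarrow> real)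
   \<Rightarrow> ('n \<Rightarrow> 'n \<Rightarrow> real) \<Rightarrow> ('n \<Rightarrow> real) \<Rightarrow> ('n \<Rightarrow> 'n \<Rightarrow> real) \<Rightarrow> ('n \<Rightarrow> real) \<Rightarrow> bool" where
  "mixed_fleet_equilibrium p c R N M b t xA wA xC wC \<longleftrightarrow>
     eq_cond_i N M b t xA wA xC wC \<and> eq_cond_ii p c R N b t xC wC \<and>
     (\<forall>xA' wA' xC' wC'. eq_cond_i N M b t xA' wA' xC' wC' \<and> eq_cond_ii p c R N b t xC' wC' \<longrightarrow>
        platform_profit p c R b t xA' xC' \<le> platform_profit p c R b t xA xC)"

end

theory Submission
  imports Defs
begin

lemma wsum_scale: "wsum f (\<lambda>i j. k * y i j) = k * wsum f y"
  by (simp add: wsum_def sum_distrib_left algebra_simps)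

lemma wsum_add: "wsum (\<lambda>i \<alpha>. f i \<alpha> + g i \<alpha>) y = wsum f y + wsum g y"
  by (simp add: wsum_def sum.distrib algebra_simps)

lemma flow_balance_scale:
  assumes "flow_balance b y" shows "flow_balance b (\<lambda>i j. k * y i j)"
proof -
  have "\<And>i. (\<Sum>j\<in>UNIV. (\<Sum>m\<in>UNIV. k * y m j) * q b j i) = k * (\<Sum>j\<in>UNIV. (\<Sum>m\<in>UNIV. y m j) * q b j i)"
    by (simp add: sum_distrib_left[symmetric] mult.assoc)
  then show ?thesis using assms unfolding flow_balance_def
    by (simp add: sum_distrib_left)
qed

lemma lam_sum:
  fixes y x :: "'n::finite \<Rightarrow> 'n \<Rightarrow> real"
  shows "(\<Sum>i\<in>UNIV. lam i * (inflow y i - inflow x i))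
     = wsum (\<lambda>i \<alpha>. lam \<alpha>) y - wsum (\<lambda>i \<alpha>. lam \<alpha>) x"
proof -
  have "\<And>z::'n \<Rightarrow> 'n \<Rightarrow> real. wsum (\<lambda>i \<alpha>. lam \<alpha>) z = (\<Sum>i\<in>UNIV. lam i * inflow z i)"
    unfolding wsum_def inflow_def
    by (subst sum.swap) (simp add: sum_distrib_left)
  then show ?thesis by (simp add: right_diff_distrib sum_subtractf)
qed

theorem proposition4:
  fixes b t :: "'n::finite \<Rightarrow> 'n \<Rightarrow> real"
    and p c R N M :: real
    and xA xC :: "'n \<Rightarrow> 'n \<Rightarrow> real" and wA wC :: "'n \<Rightarrow> real"
  assumes b_nonneg: "\<forall>i j. 0 \<le> b i j"
    and b_pos: "\<forall>i. 0 < (\<Sum>j\<in>UNIV. b i j)"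
    and t_pos: "\<forall>i j. i \<noteq> j \<longrightarrow> 0 < t i j"
    and t_diag: "\<forall>i. t i i = 0"
    and p_pos: "0 < p" and c_nonneg: "0 \<le> c"
    and R_range: "0 < R" "R < 1"
    and N_pos: "0 < N" and M_nonneg: "0 \<le> M"
    and eq: "mixed_fleet_equilibrium p c R N M b t xA wA xC wC"
  shows "CV_optimal p c R N b t (\<lambda>i. \<Sum>j\<in>UNIV. xC j i) xC
       \<and> CV_capacity_multipliers p c R N b t (\<lambda>i. \<Sum>j\<in>UNIV. xC j i) xC wC"
proof -
  define r where "r = rC p c R b t"
  define tau where "tau = tau_dr b t"
  define s where "s = (\<lambda>y. wsum (\<lambda>i \<alpha>. tau i \<alpha> + wC \<alpha>) y)"
  define W where "W = (\<lambda>y. wsum (\<lambda>i \<alpha>. wC \<alpha>) y)"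
  have ci: "eq_cond_i N M b t xA wA xC wC" and cii: "eq_cond_ii p c R N b t xC wC"
    using eq unfolding mixed_fleet_equilibrium_def by auto
  have xC_nn: "nonneg_mat xC" and wC_nn: "nonneg_vec wC" and xC_fb: "flow_balance b xC"
    and sxC: "s xC = N"
    using ci unfolding eq_cond_i_def s_def tau_def by auto
  define Rs where "Rs = wsum r xC"
  have t_nn: "0 \<le> t i j" for i j using t_pos t_diag
    by (cases "i = j") (auto intro: less_imp_le)
  have q_nn: "0 \<le> q b i j" for i j
    unfolding q_def using b_nonneg b_pos by (simp add: less_imp_le)
  have avg_nn: "0 \<le> avg_trip b t a" for a
    unfolding avg_trip_def using q_nn t_nn by (simp add: sum_nonneg)
  have tau_nn: "0 \<le> tau i a" for i a
    unfolding tau_def tau_dr_def using t_nn avg_nn by (simp add: add_nonneg_nonneg)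
  have key: "N * wsum r y \<le> s y * Rs" if y_nn: "nonneg_mat y" and y_fb: "flow_balance b y" for y
  proof (cases "s y = 0")
    case True
    have terms_nn: "0 \<le> (tau i a + wC a) * y i a" for i a
      using tau_nn wC_nn y_nn unfolding nonneg_vec_def nonneg_mat_def by simp
    have inner0: "(\<Sum>a\<in>UNIV. (tau i a + wC a) * y i a) = 0" for i
    proof -
      have "(\<Sum>i\<in>UNIV. \<Sum>a\<in>UNIV. (tau i a + wC a) * y i a) = 0"
        using True unfolding s_def wsum_def by simp
      moreover have "\<forall>i\<in>UNIV. 0 \<le> (\<Sum>a\<in>UNIV. (tau i a + wC a) * y i a)"
        using terms_nn by (simp add: sum_nonneg)
      ultimately show ?thesis by (simp add: sum_nonneg_eq_0_iff)
    qed
    have term0: "(tau i a + wC a) * y i a = 0" for i a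
      using inner0[of i] terms_nn by (simp add: sum_nonneg_eq_0_iff)
    have r0: "r i a * y i a = 0" for i a
    proof (cases "y i a = 0")
      case False
      then have "tau i a + wC a = 0" using term0[of i a] by simp
      then have "tau i a = 0" using tau_nn[of i a] wC_nn unfolding nonneg_vec_def
        by (metis add_nonneg_eq_0_iff)
      then have "t i a = 0" "avg_trip b t a = 0"
        using t_nn[of i a] avg_nn[of a] unfolding tau_def tau_dr_def by auto
      then show ?thesis unfolding r_def rC_def tau_dr_def by simp
    qed simp
    have "wsum r y = 0" unfolding wsum_def by (simp add: r0)
    then show ?thesis using True by simp
  next
    case False
    have s_nn: "0 \<le> s y"
      unfolding s_def wsum_def using tau_nn wC_nn y_nn unfolding nonneg_vec_def nonneg_mat_def
      by (simp add: sum_nonneg)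
    with False have spos: "0 < s y" by simp
    define y' where "y' = (\<lambda>i j. (N / s y) * y i j)"
    have "nonneg_mat y'" unfolding y'_def nonneg_mat_def using y_nn N_pos spos
      unfolding nonneg_mat_def by simp
    moreover have "flow_balance b y'" unfolding y'_def by (rule flow_balance_scale[OF y_fb])
    moreover have "wsum (\<lambda>i \<alpha>. tau_dr b t i \<alpha> + wC \<alpha>) y' = N"
      unfolding y'_def wsum_scale using spos unfolding s_def tau_def by simp
    ultimately have "wsum r y' \<le> Rs"
      using cii unfolding eq_cond_ii_def r_def Rs_def by blast
    then have "(N / s y) * wsum r y \<le> Rs" unfolding y'_def wsum_scale .
    then show ?thesis using spos by (simp add: field_simps)
  qed
  have lag: "CV_lagrangian p c R N b t (\<lambda>i. \<Sum>j\<in>UNIV. xC j i) wC y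
      \<le> CV_lagrangian p c R N b t (\<lambda>i. \<Sum>j\<in>UNIV. xC j i) wC xC"
    if y_nn: "nonneg_mat y" and y_fb: "flow_balance b y" for y
  proof (cases "0 < wsum r y")
    case False
    then show ?thesis unfolding CV_lagrangian_def CV_obj_def r_def by simp
  next
    case True
    have k: "N * wsum r y \<le> s y * Rs" using key y_nn y_fb by blast
    have s_nn: "0 \<le> s y"
      unfolding s_def wsum_def using tau_nn wC_nn y_nn unfolding nonneg_vec_def nonneg_mat_def
      by (simp add: sum_nonneg)
    have NW: "0 < N * wsum r y" using True N_pos by simp
    have spos: "0 < s y"
    proof (rule ccontr)
      assume "\<not> 0 < s y" then have "s y = 0" using s_nn by simp
      then show False using k NW by simp
    qed
    have Rpos: "0 < Rs"
    proof (rule ccontr)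
      assume "\<not> 0 < Rs" then have "s y * Rs \<le> 0" using spos by (simp add: mult_nonneg_nonpos)
      then show False using k NW by simp
    qed
    have lnle: "ln (wsum r y) \<le> ln (s y) + ln Rs - ln N"
    proof -
      have "wsum r y \<le> s y * Rs / N" using k N_pos by (simp add: field_simps)
      then have "ln (wsum r y) \<le> ln (s y * Rs / N)" using True by simp
      also have "\<dots> = ln (s y) + ln Rs - ln N" using spos Rpos N_pos
        by (simp add: ln_div ln_mult)
      finally show ?thesis .
    qed
    have lnN: "ln (s y / N) \<le> s y / N - 1" using spos N_pos by (intro ln_le_minus_one) simp
    have lnN': "N * ln (s y) - N * ln N \<le> s y - N"
    proof -
      have "N * ln (s y / N) \<le> N * (s y / N - 1)" using lnN N_pos by simp
      moreover have "N * ln (s y / N) = N * ln (s y) - N * ln N"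
        using spos N_pos by (simp add: ln_div right_diff_distrib)
      moreover have "N * (s y / N - 1) = s y - N" using N_pos by (simp add: field_simps)
      ultimately show ?thesis by simp
    qed
    have sy: "s y = wsum tau y + W y" unfolding s_def W_def by (simp add: wsum_add)
    have sx: "N = wsum tau xC + W xC" using sxC unfolding s_def W_def by (simp add: wsum_add)
    have main: "N * ln (wsum r y) - wsum tau y - (W y - W xC) \<le> N * ln Rs - wsum tau xC"
    proof -
      have "N * ln (wsum r y) \<le> N * (ln (s y) + ln Rs - ln N)" using lnle N_pos by simp
      then show ?thesis using lnN' sy sx by (simp add: algebra_simps)
    qed
    have ls: "(\<Sum>i\<in>UNIV. wC i * (inflow y i - (\<Sum>j\<in>UNIV. xC j i))) = W y - W xC"
      using lam_sum[of wC y xC] unfolding W_def inflow_def by simp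
    show ?thesis unfolding CV_lagrangian_def CV_obj_def ls
      using True Rpos main unfolding r_def[symmetric] tau_def[symmetric] Rs_def[symmetric]
      by (simp add: inflow_def)
  qed
  have mult: "CV_capacity_multipliers p c R N b t (\<lambda>i. \<Sum>j\<in>UNIV. xC j i) xC wC"
    unfolding CV_capacity_multipliers_def using wC_nn lag by (simp add: inflow_def)
  have opt: "CV_optimal p c R N b t (\<lambda>i. \<Sum>j\<in>UNIV. xC j i) xC"
    unfolding CV_optimal_def
  proof (intro conjI allI impI)
    show "CV_feasible b (\<lambda>i. \<Sum>j\<in>UNIV. xC j i) xC"
      unfolding CV_feasible_def inflow_def using xC_nn xC_fb by simp
  next
    fix y assume fy: "CV_feasible b (\<lambda>i. \<Sum>j\<in>UNIV. xC j i) y"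
    then have y_nn: "nonneg_mat y" and y_fb: "flow_balance b y"
      and cap: "\<forall>i. inflow y i \<le> (\<Sum>j\<in>UNIV. xC j i)" unfolding CV_feasible_def by auto
    have pen: "(\<Sum>i\<in>UNIV. wC i * (inflow y i - (\<Sum>j\<in>UNIV. xC j i))) \<le> 0"
      using cap wC_nn unfolding nonneg_vec_def
      by (intro sum_nonpos) (simp add: mult_nonneg_nonpos)
    have "CV_obj p c R N b t y \<le> CV_lagrangian p c R N b t (\<lambda>i. \<Sum>j\<in>UNIV. xC j i) wC y"
      unfolding CV_lagrangian_def using pen
      by (cases "CV_obj p c R N b t y") auto
    also have "\<dots> \<le> CV_lagrangian p c R N b t (\<lambda>i. \<Sum>j\<in>UNIV. xC j i) wC xC"
      using lag y_nn y_fb by blast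
    also have "\<dots> = CV_obj p c R N b t xC"
      unfolding CV_lagrangian_def inflow_def by simp
    finally show "CV_obj p c R N b t y \<le> CV_obj p c R N b t xC" .
  qed
  show ?thesis using opt mult by blast
qed

end
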